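(* Let $d\ge1$, $0<s<d$, and let $\nu$ be a Frostman measure on a compact set $E\subset\mathbb{R}^d$ with $\dim_{\mathcal H}(E)>s$. For $\delta\in(0,1]$ and $\alpha\in\mathbb{C}$ with $\operatorname{Re}(\alpha)=d-s$, let $\nu^\delta_\alpha$ be as defined below. Then $\|\nu^\delta_\alpha\|_{L^\infty(\mathbb{R}^d)}\lesssim1$ with a constant independent of $\delta$.
   Context: A Frostman measure on $E$ is a Borel probability measure supported on $E$ with $\nu(B(x,r))\le Cr^{s'}$ for all $x\in\mathbb{R}^d$, $r>0$, for some $s'>s$. Let $\rho$ be a nonnegative smooth function on $\mathbb{R}^d$ with $\int\rho=1$, supported in the unit ball and equal to $1$ near the origin at scale $1/4$; set $\rho_\delta(x)=\delta^{-d}\rho(x/\delta)$ and $\nu^\delta=\nu*\rho_\delta$. For $\operatorname{Re}(\beta)>0$, $\nu^\delta_\beta(x)=\frac{2^{(d-\beta)/2}}{\Gamma(\beta/2)}(\nu^\delta*|\cdot|^{-d+\beta})(x)$. *)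

theory Defs
  imports "HOL-Probability.Probability"
begin

fun iter_pderiv :: "'a::euclidean_space list \<Rightarrow> ('a \<Rightarrow> real) \<Rightarrow> 'a \<Rightarrow> real" where
  "iter_pderiv [] f = f"
| "iter_pderiv (v # vs) f = (\<lambda>x. frechet_derivative (iter_pderiv vs f) (at x) v)"

definition smooth_fun :: "('a::euclidean_space \<Rightarrow> real) \<Rightarrow> bool" where
  "smooth_fun f \<longleftrightarrow> (\<forall>vs. set vs \<subseteq> Basis \<longrightarrow> iter_pderiv vs f differentiable_on UNIV)"

definition hausdorff_content :: "real \<Rightarrow> 'a::euclidean_space set \<Rightarrow> ennreal" where
  "hausdorff_content t E =
     Inf {(\<Sum>i. ennreal (diameter (U i) powr t)) | U :: nat \<Rightarrow> 'a set.
            (\<forall>i. bounded (U i)) \<and> E \<subseteq> (\<Union>i. U i)}"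

definition hausdorff_dim :: "'a::euclidean_space set \<Rightarrow> real" where
  "hausdorff_dim E = Inf {t. 0 \<le> t \<and> hausdorff_content t E = 0}"

definition frostman :: "'a::euclidean_space measure \<Rightarrow> 'a set \<Rightarrow> real \<Rightarrow> bool" where
  "frostman nu E s \<longleftrightarrow> prob_space nu \<and> sets nu = sets borel \<and> E \<in> sets borel \<and>
     measure nu E = 1 \<and>
     (\<exists>C s'. s' > s \<and> (\<forall>x r. r > 0 \<longrightarrow> measure nu (ball x r) \<le> C * r powr s'))"

definition bump :: "('a::euclidean_space \<Rightarrow> real) \<Rightarrow> bool" where
  "bump rho \<longleftrightarrow> (\<forall>x. 0 \<le> rho x) \<and> smooth_fun rho \<and>
     integrable lborel rho \<and> integral\<^sup>L lborel rho = 1 \<and>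
     (\<forall>x. rho x \<noteq> 0 \<longrightarrow> norm x \<le> 1) \<and>
     (\<forall>x. norm x \<le> 1/4 \<longrightarrow> rho x = 1)"

definition rho_delta :: "('a::euclidean_space \<Rightarrow> real) \<Rightarrow> real \<Rightarrow> 'a \<Rightarrow> real" where
  "rho_delta rho \<delta> x = (1 / \<delta> ^ DIM('a)) * rho ((1 / \<delta>) *\<^sub>R x)"

definition nu_delta :: "'a::euclidean_space measure \<Rightarrow> ('a \<Rightarrow> real) \<Rightarrow> real \<Rightarrow> 'a \<Rightarrow> real" where
  "nu_delta nu rho \<delta> x = (\<integral>y. rho_delta rho \<delta> (x - y) \<partial>nu)"

definition nu_delta_beta ::
  "'a::euclidean_space measure \<Rightarrow> ('a \<Rightarrow> real) \<Rightarrow> real \<Rightarrow> complex \<Rightarrow> 'a \<Rightarrow> complex" where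
  "nu_delta_beta nu rho \<delta> \<beta> x =
     2 powr ((of_nat DIM('a) - \<beta>) / 2) / Gamma (\<beta> / 2) *
     (\<integral>y. of_real (nu_delta nu rho \<delta> y) *
            of_real (norm (x - y)) powr (\<beta> - of_nat DIM('a)) \<partial>lborel)"

end

theory Submission
  imports Defs "HOL-Analysis.Ball_Volume"
begin

lemma dyadic_exists:
  fixes d R :: real assumes "0 < d" "d \<le> R"
  shows "\<exists>k::nat. R / 2^(Suc k) < d \<and> d \<le> R / 2^k"
proof -
  obtain n where n: "R / d < 2^n" using real_arch_pow[of 2 "R/d"] by auto
  hence ex: "R / 2^n < d" using assms by (simp add: field_simps)
  define m where "m = (LEAST n. R / 2^n < d)"
  have m: "R / 2^m < d" unfolding m_def by (rule LeastI[of _ n]) (rule ex)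
  have m0: "m \<noteq> 0" proof assume "m = 0" thus False using m assms by simp qed
  then obtain k where k: "m = Suc k" by (cases m) auto
  have "\<not> R / 2^k < d" using Least_le[of "\<lambda>n. R / 2^n < d" k] k m_def by fastforce
  thus ?thesis using m k by (intro exI[of _ k]) auto
qed

lemma pow_alg:
  fixes R s t A :: real and k :: nat assumes R: "R > 0"
  shows "(R / 2^(Suc k)) powr (-s) * (A * (R/2^k) powr t) = A * 2 powr s * R powr (t-s) * (2 powr (s-t))^k"
proof -
  have p: "(2::real)^n = 2 powr (real n)" for n by (simp add: powr_realpow)
  have e1: "(R / 2^(Suc k)) powr (-s) = R powr (-s) * (2 powr s * 2 powr (s * real k))"
    using R by (simp only: p powr_divide powr_powr powr_minus_divide) (simp add: powr_minus divide_simps powr_add algebra_simps)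
  have e2: "(R/2^k) powr t = R powr t / 2 powr (t * real k)"
    using R by (simp only: p powr_divide powr_powr mult.commute)
  have e3: "(2 powr (s-t))^k = 2 powr (s * real k) / 2 powr (t * real k)"
  proof -
    have "(2 powr (s-t))^k = (2::real) powr ((s - t) * real k)" by (simp add: powr_power mult.commute)
    also have "\<dots> = 2 powr (s * real k - t * real k)" by (simp add: left_diff_distrib)
    finally show ?thesis by (simp only: powr_diff)
  qed
  have e4: "R powr (t - s) = R powr t * R powr (-s)" using powr_add[of R t "-s"] by simp
  show ?thesis unfolding e1 e2 e3 e4 by (simp add: field_simps)
qed

lemma shell:
  fixes \<mu> :: "'a::euclidean_space measure" and x :: 'a
  assumes sets: "sets \<mu> = sets borel" and s: "0 < s" "s < t" and A: "A \<ge> 0" and R: "R > 0"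
  and bound: "\<And>r. r > 0 \<Longrightarrow> emeasure \<mu> (cball x r) \<le> ennreal (A * r powr t)"
  shows "(\<integral>\<^sup>+y. indicator (cball x R) y * ennreal (dist x y powr (-s)) \<partial>\<mu>)
     \<le> ennreal (A * 2 powr s * R powr (t-s) / (1 - 2 powr (s-t)))"
proof -
  have [measurable_cong]: "sets \<mu> = sets borel" by (rule sets)
  have cb[measurable]: "\<And>r. cball x r \<in> sets borel" by simp
  define c where "c k = (R / 2^(Suc k)) powr (-s)" for k :: nat
  define q where "q = 2 powr (s - t)"
  have q: "0 < q" "q < 1" using s unfolding q_def by (auto intro: powr_less_one)
  have pw: "indicator (cball x R) y * ennreal (dist x y powr (-s))
      \<le> (\<Sum>k. ennreal (c k) * indicator (cball x (R/2^k)) y)" for y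
  proof (cases "y \<in> cball x R \<and> y \<noteq> x")
    case False thus ?thesis by (auto simp: indicator_def)
  next
    case True
    hence d: "0 < dist x y" "dist x y \<le> R" by auto
    obtain k where k: "R / 2^(Suc k) < dist x y" "dist x y \<le> R / 2^k"
      using dyadic_exists[OF d] by blast
    have "dist x y powr (-s) \<le> c k" unfolding c_def
      using k s R by (intro powr_mono2') auto
    hence "indicator (cball x R) y * ennreal (dist x y powr (-s)) \<le> ennreal (c k) * indicator (cball x (R/2^k)) y"
      using True k by (auto simp: indicator_def intro: ennreal_leI)
    also have "\<dots> \<le> (\<Sum>k. ennreal (c k) * indicator (cball x (R/2^k)) y)"
      using sum_le_suminf[OF summableI, of "{k}" "\<lambda>k. ennreal (c k) * indicator (cball x (R/2^k)) y"] by (simp only: sum.insert sum.empty finite.emptyI finite_insert empty_iff add_0_right simp_thms ComplI) (simp only: zero_le)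
    finally show ?thesis .
  qed
  have "(\<integral>\<^sup>+y. indicator (cball x R) y * ennreal (dist x y powr (-s)) \<partial>\<mu>)
      \<le> (\<integral>\<^sup>+y. (\<Sum>k. ennreal (c k) * indicator (cball x (R/2^k)) y) \<partial>\<mu>)"
    by (intro nn_integral_mono pw)
  also have "\<dots> = (\<Sum>k. \<integral>\<^sup>+y. ennreal (c k) * indicator (cball x (R/2^k)) y \<partial>\<mu>)"
    by (intro nn_integral_suminf) measurable
  also have "\<dots> = (\<Sum>k. ennreal (c k) * emeasure \<mu> (cball x (R/2^k)))"
    by (intro suminf_cong nn_integral_cmult_indicator) (simp add: sets)
  also have "\<dots> \<le> (\<Sum>k. ennreal (A * 2 powr s * R powr (t-s) * q^k))"
  proof (intro suminf_le summableI)
    fix k :: nat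
    have "ennreal (c k) * emeasure \<mu> (cball x (R/2^k)) \<le> ennreal (c k) * ennreal (A * (R/2^k) powr t)"
      using bound[of "R/2^k"] R by (intro mult_left_mono) auto
    also have "\<dots> = ennreal (c k * (A * (R/2^k) powr t))"
      unfolding c_def by (simp add: ennreal_mult')
    also have "c k * (A * (R/2^k) powr t) = A * 2 powr s * R powr (t-s) * q^k"
      unfolding c_def q_def using R by (rule pow_alg)
    finally show "ennreal (c k) * emeasure \<mu> (cball x (R/2^k)) \<le> ennreal (A * 2 powr s * R powr (t-s) * q^k)" .
  qed
  also have "\<dots> = ennreal (A * 2 powr s * R powr (t-s) / (1 - 2 powr (s-t)))"
    apply (rule suminf_ennreal_eq)
    using q A apply simp
    using sums_mult[OF geometric_sums[of q], of "A * 2 powr s * R powr (t-s)"] q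
    by (simp add: q_def divide_simps)
  finally show ?thesis .
qed


lemma kernel_bound:
  fixes rho :: "'a::euclidean_space \<Rightarrow> real" and x z :: 'a and s M V \<delta> :: real
  assumes rho_meas[measurable]: "rho \<in> borel_measurable borel"
    and nonneg: "\<And>y. 0 \<le> rho y" and supp: "\<And>y. rho y \<noteq> 0 \<Longrightarrow> norm y \<le> 1"
    and Mb: "\<And>y. rho y \<le> M"
    and V: "V \<ge> 0" and leb: "\<And>(c::'a) r. r > 0 \<Longrightarrow> emeasure lborel (cball c r) = ennreal (V * r powr DIM('a))"
    and s: "0 < s" "s < DIM('a)" and \<delta>: "\<delta> > 0" and zx: "z \<noteq> x"
  shows "(\<integral>\<^sup>+y. ennreal (rho_delta rho \<delta> (y - z) * dist x y powr (-s)) \<partial>lborel)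
    \<le> ennreal (M * 2 powr s * (V + V * 2 powr s / (1 - 2 powr (s - DIM('a))) * 3 powr (DIM('a) - s))
        * dist x z powr (-s))"
proof -
  define D where "D = real DIM('a)"
  define r where "r = dist x z"
  define q where "q = (2::real) powr (s - D)"
  define SL where "SL = V * 2 powr s / (1 - q)"
  have r: "r > 0" using zx unfolding r_def by auto
  have M: "M \<ge> 0" using Mb[of 0] nonneg[of 0] by linarith
  have q: "0 < q" "q < 1" using s unfolding q_def D_def by (auto intro: powr_less_one)
  have SL: "SL \<ge> 0" unfolding SL_def using V q by auto
  have dpow: "\<delta> ^ DIM('a) = \<delta> powr D" unfolding D_def using \<delta> by (simp add: powr_realpow)
  have dpos: "\<delta> powr D > 0" using \<delta> by simp
  have cb[measurable]: "\<And>c r. cball c r \<in> sets borel" by simp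
  have pw: "rho_delta rho \<delta> (y - z) \<le> M / \<delta> powr D * indicator (cball z \<delta>) y" for y
  proof (cases "y \<in> cball z \<delta>")
    case True
    have "rho_delta rho \<delta> (y - z) = (1 / \<delta> powr D) * rho ((1 / \<delta>) *\<^sub>R (y - z))"
      unfolding rho_delta_def dpow ..
    also have "\<dots> \<le> (1 / \<delta> powr D) * M" using Mb dpos by (intro mult_left_mono) auto
    finally show ?thesis using True by (simp add: indicator_def)
  next
    case False
    have e: "norm ((1 / \<delta>) *\<^sub>R (y - z)) = dist y z / \<delta>" using \<delta>
      by (simp only: norm_scaleR dist_norm) simp
    have "dist y z > \<delta>" using False by (simp add: dist_commute)
    hence "norm ((1 / \<delta>) *\<^sub>R (y - z)) > 1" unfolding e using \<delta> by simp
    hence "rho ((1 / \<delta>) *\<^sub>R (y - z)) = 0" using supp by force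
    thus ?thesis using False unfolding rho_delta_def by simp
  qed
  have "(\<integral>\<^sup>+y. ennreal (rho_delta rho \<delta> (y - z) * dist x y powr (-s)) \<partial>lborel)
      \<le> (\<integral>\<^sup>+y. ennreal (M / \<delta> powr D) * (indicator (cball z \<delta>) y * ennreal (dist x y powr (-s))) \<partial>lborel)"
  proof (intro nn_integral_mono)
    fix y
    have rn: "rho_delta rho \<delta> (y - z) \<ge> 0" unfolding rho_delta_def using nonneg \<delta> by simp
    show "ennreal (rho_delta rho \<delta> (y - z) * dist x y powr (-s))
      \<le> ennreal (M / \<delta> powr D) * (indicator (cball z \<delta>) y * ennreal (dist x y powr (-s)))"
    proof (cases "y \<in> cball z \<delta>")
      case True
      have "rho_delta rho \<delta> (y - z) * dist x y powr (-s) \<le> (M / \<delta> powr D) * dist x y powr (-s)"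
        using pw[of y] True by (intro mult_right_mono) auto
      hence "ennreal (rho_delta rho \<delta> (y - z) * dist x y powr (-s)) \<le> ennreal ((M / \<delta> powr D) * dist x y powr (-s))"
        by (rule ennreal_leI)
      moreover have "ennreal ((M / \<delta> powr D) * dist x y powr (-s)) = ennreal (M / \<delta> powr D) * ennreal (dist x y powr (-s))"
        using M dpos by (intro ennreal_mult) auto
      ultimately show ?thesis using True by simp
    next
      case False
      hence "rho_delta rho \<delta> (y - z) = 0" using pw[of y] rn by simp
      thus ?thesis by simp
    qed
  qed
  also have "\<dots> = ennreal (M / \<delta> powr D) * (\<integral>\<^sup>+y. indicator (cball z \<delta>) y * ennreal (dist x y powr (-s)) \<partial>lborel)"
    by (intro nn_integral_cmult) measurable
  also have "\<dots> \<le> ennreal (M * 2 powr s * (V + SL * 3 powr (D - s)) * r powr (-s))"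
  proof (cases "r \<ge> 2 * \<delta>")
    case True
    have "(\<integral>\<^sup>+y. indicator (cball z \<delta>) y * ennreal (dist x y powr (-s)) \<partial>lborel)
       \<le> (\<integral>\<^sup>+y. ennreal ((r/2) powr (-s)) * indicator (cball z \<delta>) y \<partial>lborel)"
    proof (intro nn_integral_mono)
      fix y
      show "indicator (cball z \<delta>) y * ennreal (dist x y powr (-s)) \<le> ennreal ((r/2) powr (-s)) * indicator (cball z \<delta>) y"
      proof (cases "y \<in> cball z \<delta>")
        case True
        have "dist x z \<le> dist x y + dist z y" using dist_triangle[of x z y] by (simp add: dist_commute)
        hence "r / 2 \<le> dist x y" using True \<open>r \<ge> 2*\<delta>\<close> unfolding r_def by auto
        hence "dist x y powr (-s) \<le> (r/2) powr (-s)" using r s by (intro powr_mono2') auto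
        thus ?thesis using True by (auto intro: ennreal_leI)
      qed auto
    qed
    also have "\<dots> = ennreal ((r/2) powr (-s)) * emeasure lborel (cball z \<delta>)"
      by (intro nn_integral_cmult_indicator) simp
    also have "\<dots> = ennreal ((r/2) powr (-s) * (V * \<delta> powr D))"
      using leb[OF \<delta>, of z] unfolding D_def by (simp add: ennreal_mult')
    finally have I: "(\<integral>\<^sup>+y. indicator (cball z \<delta>) y * ennreal (dist x y powr (-s)) \<partial>lborel)
       \<le> ennreal ((r/2) powr (-s) * (V * \<delta> powr D))" .
    have "ennreal (M / \<delta> powr D) * (\<integral>\<^sup>+y. indicator (cball z \<delta>) y * ennreal (dist x y powr (-s)) \<partial>lborel)
        \<le> ennreal (M / \<delta> powr D) * ennreal ((r/2) powr (-s) * (V * \<delta> powr D))"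
      by (intro mult_left_mono I) auto
    also have "\<dots> = ennreal (M * V * 2 powr s * r powr (-s))"
    proof -
      have "(r/2) powr (-s) = r powr (-s) * 2 powr s" using r
        by (simp add: powr_divide powr_minus divide_simps)
      thus ?thesis using dpos M by (simp add: ennreal_mult'[symmetric] field_simps)
    qed
    also have "\<dots> \<le> ennreal (M * 2 powr s * (V + SL * 3 powr (D - s)) * r powr (-s))"
      using M SL V by (intro ennreal_leI mult_right_mono) (auto simp: algebra_simps)
    finally show ?thesis .
  next
    case False
    have "(\<integral>\<^sup>+y. indicator (cball z \<delta>) y * ennreal (dist x y powr (-s)) \<partial>lborel)
       \<le> (\<integral>\<^sup>+y. indicator (cball x (3*\<delta>)) y * ennreal (dist x y powr (-s)) \<partial>lborel)"
    proof (intro nn_integral_mono)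
      fix y
      have "y \<in> cball z \<delta> \<Longrightarrow> y \<in> cball x (3*\<delta>)"
        using dist_triangle[of x y z] False unfolding r_def by auto
      thus "indicator (cball z \<delta>) y * ennreal (dist x y powr (-s)) \<le> indicator (cball x (3*\<delta>)) y * ennreal (dist x y powr (-s))"
        by (auto simp: indicator_def)
    qed
    also have "\<dots> \<le> ennreal (V * 2 powr s * (3*\<delta>) powr (D - s) / (1 - q))"
      unfolding q_def
      using s \<delta> V leb unfolding D_def by (intro shell) auto
    finally have I: "(\<integral>\<^sup>+y. indicator (cball z \<delta>) y * ennreal (dist x y powr (-s)) \<partial>lborel)
       \<le> ennreal (SL * (3*\<delta>) powr (D - s))" unfolding SL_def by (simp add: field_simps)
    have "ennreal (M / \<delta> powr D) * (\<integral>\<^sup>+y. indicator (cball z \<delta>) y * ennreal (dist x y powr (-s)) \<partial>lborel)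
        \<le> ennreal (M / \<delta> powr D) * ennreal (SL * (3*\<delta>) powr (D - s))"
      by (intro mult_left_mono I) auto
    also have "\<dots> = ennreal (M * SL * 3 powr (D - s) * \<delta> powr (-s))"
    proof -
      have "(3*\<delta>) powr (D - s) = 3 powr (D - s) * (\<delta> powr D * \<delta> powr (-s))" using \<delta>
        by (simp add: powr_mult powr_add[symmetric])
      thus ?thesis using dpos M SL by (simp add: ennreal_mult'[symmetric] field_simps)
    qed
    also have "\<dots> \<le> ennreal (M * 2 powr s * (V + SL * 3 powr (D - s)) * r powr (-s))"
    proof (intro ennreal_leI)
      have "\<delta> powr (-s) \<le> (r/2) powr (-s)" using False r s by (intro powr_mono2') auto
      also have "(r/2) powr (-s) = 2 powr s * r powr (-s)" using r
        by (simp add: powr_divide powr_minus divide_simps)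
      finally have "M * SL * 3 powr (D - s) * \<delta> powr (-s) \<le> M * SL * 3 powr (D - s) * (2 powr s * r powr (-s))"
        using M SL by (intro mult_left_mono) auto
      also have "\<dots> \<le> M * 2 powr s * (V + SL * 3 powr (D - s)) * r powr (-s)"
        using M V by (simp add: algebra_simps)
      finally show "M * SL * 3 powr (D - s) * \<delta> powr (-s) \<le> M * 2 powr s * (V + SL * 3 powr (D - s)) * r powr (-s)" .
    qed
    finally show ?thesis .
  qed
  finally show ?thesis unfolding SL_def q_def D_def r_def .
qed


theorem lemma3:
  fixes E :: "'a::euclidean_space set" and nu :: "'a measure" and s :: real
    and rho :: "'a \<Rightarrow> real" and \<alpha> :: complex
  assumes "0 < s" and "s < real DIM('a)"
    and "compact E" and "hausdorff_dim E > s"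
    and "frostman nu E s"
    and "bump rho"
    and "Re \<alpha> = real DIM('a) - s"
  shows "\<exists>K. \<forall>\<delta>\<in>{0<..1}. \<forall>x. cmod (nu_delta_beta nu rho \<delta> \<alpha> x) \<le> K"
proof -
  note s = assms(1,2)
  define D where "D = real DIM('a)"
  obtain C s' where prob: "prob_space nu" and nusets: "sets nu = sets borel"
      and s': "s' > s" and fb: "\<And>x r. r > 0 \<Longrightarrow> measure nu (ball x r) \<le> C * r powr s'"
    using assms(5) unfolding frostman_def by blast
  interpret nu: prob_space nu by (rule prob)
  have [measurable_cong]: "sets nu = sets borel" by (rule nusets)
  have C: "C \<ge> 0" using fb[of 1 0] measure_nonneg[of nu "ball 0 1"] by (simp del: measure_nonneg)
  have nu_cb: "emeasure nu (cball x r) \<le> ennreal ((C * 2 powr s') * r powr s')" if r: "r > 0" for x r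
  proof -
    have "emeasure nu (cball x r) \<le> emeasure nu (ball x (2*r))"
      using r by (intro emeasure_mono) (auto simp: nusets)
    also have "\<dots> = ennreal (measure nu (ball x (2*r)))" by (rule nu.emeasure_eq_measure)
    also have "\<dots> \<le> ennreal (C * (2*r) powr s')" using fb[of "2*r" x] r by (intro ennreal_leI) auto
    also have "(2*r) powr s' = 2 powr s' * r powr s'" using r by (simp add: powr_mult)
    finally show ?thesis by (simp add: mult.assoc)
  qed
  have nu_pt: "emeasure nu {x} = 0" for x
  proof -
    have "measure nu {x} \<le> 0"
    proof (rule field_le_epsilon)
      fix e :: real assume e: "e > 0"
      define r where "r = (e / (C + 1)) powr (1 / s')"
      have r: "r > 0" unfolding r_def using e C by simp
      have rp: "r powr s' = e / (C + 1)" unfolding r_def using s' s e C by (simp add: powr_powr)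
      have "measure nu {x} \<le> measure nu (ball x r)"
        using r by (intro nu.finite_measure_mono) (auto simp: nusets)
      also have "\<dots> \<le> C * r powr s'" using fb[OF r] .
      also have "\<dots> = C * (e / (C + 1))" by (simp only: rp)
      also have "\<dots> \<le> e" using C e by (simp add: field_simps)
      finally show "measure nu {x} \<le> 0 + e" by simp
    qed
    thus ?thesis using measure_nonneg[of nu "{x}"] by (simp add: nu.emeasure_eq_measure)
  qed
  have rho_nn: "\<And>y. 0 \<le> rho y" and rho_supp: "\<And>y. rho y \<noteq> 0 \<Longrightarrow> norm y \<le> 1"
    and rho_sm: "smooth_fun rho" using assms(6) unfolding bump_def by auto
  have "iter_pderiv [] rho differentiable_on UNIV" using rho_sm unfolding smooth_fun_def by (metis empty_set empty_subsetI)
  hence cont: "continuous_on UNIV rho" by (simp add: differentiable_imp_continuous_on)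
  have rho_meas[measurable]: "rho \<in> borel_measurable borel" using cont by (rule borel_measurable_continuous_onI)
  obtain M where Mb: "\<And>y. rho y \<le> M"
  proof -
    have "bounded (rho ` cball 0 1)"
      by (intro compact_imp_bounded compact_continuous_image continuous_on_subset[OF cont]) auto
    then obtain a where a: "\<And>y. y \<in> cball 0 1 \<Longrightarrow> norm (rho y) \<le> a" unfolding bounded_iff by (metis (no_types, lifting) image_eqI mem_cball_0 real_norm_def)
    have "rho y \<le> max a 0" for y
      using a[of y] rho_supp[of y] by (cases "rho y = 0") auto
    thus ?thesis using that by blast
  qed
  have M: "M \<ge> 0" using Mb[of 0] rho_nn[of 0] by linarith
  define V where "V = unit_ball_vol (real DIM('a))"
  have V: "V \<ge> 0" unfolding V_def by simp
  have leb: "\<And>(c::'a) r. r > 0 \<Longrightarrow> emeasure lborel (cball c r) = ennreal (V * r powr DIM('a))"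
    unfolding V_def by (subst emeasure_cball) (auto simp: powr_realpow)
  define B0 where "B0 = M * 2 powr s * (V + V * 2 powr s / (1 - 2 powr (s - DIM('a))) * 3 powr (DIM('a) - s))"
  have B0: "B0 \<ge> 0"
  proof -
    have "2 powr (s - DIM('a)) < (1::real)" using s by (auto intro: powr_less_one)
    thus ?thesis unfolding B0_def using M V by auto
  qed
  define Snu where "Snu = (C * 2 powr s') * 2 powr s * 1 powr (s' - s) / (1 - 2 powr (s - s'))"
  have Snu: "Snu \<ge> 0"
  proof -
    have "2 powr (s - s') < (1::real)" using s' by (auto intro: powr_less_one)
    thus ?thesis unfolding Snu_def using C by auto
  qed
  define cst where "cst = 2 powr ((of_nat DIM('a) - \<alpha>) / 2) / Gamma (\<alpha> / 2)"
  show ?thesis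
  proof (intro exI[of _ "cmod cst * (B0 * (Snu + 1))"] ballI allI)
    fix \<delta> x assume "\<delta> \<in> {0<..(1::real)}"
    hence \<delta>: "\<delta> > 0" by simp
    define f where "f y = of_real (nu_delta nu rho \<delta> y) *
            of_real (norm (x - y)) powr (\<alpha> - of_nat DIM('a))" for y
    have nd_nn: "nu_delta nu rho \<delta> y \<ge> 0" for y
      unfolding nu_delta_def rho_delta_def using rho_nn \<delta> by (intro integral_nonneg_AE) auto
    have nf: "cmod (f y) = nu_delta nu rho \<delta> y * dist x y powr (-s)" for y
    proof -
      have "cmod (of_real (norm (x - y)) powr (\<alpha> - of_nat DIM('a))) = norm (x - y) powr (-s)"
        by (subst norm_powr_real_powr) (auto simp: assms(7))
      thus ?thesis unfolding f_def using nd_nn[of y] by (simp add: norm_mult dist_norm)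
    qed
    define F where "F y z = ennreal (rho_delta rho \<delta> (y - z) * dist x y powr (-s))" for y z
    have Fm: "case_prod F \<in> borel_measurable (lborel \<Otimes>\<^sub>M nu)"
      unfolding F_def rho_delta_def by measurable
    interpret P: pair_sigma_finite lborel nu
      by (intro pair_sigma_finite.intro sigma_finite_lborel nu.sigma_finite_measure_axioms)
    have rd_nn: "rho_delta rho \<delta> w \<ge> 0" for w unfolding rho_delta_def using rho_nn \<delta> by simp
    have rd_le: "rho_delta rho \<delta> w \<le> M / \<delta> ^ DIM('a)" for w
      unfolding rho_delta_def using Mb[of "(1 / \<delta>) *\<^sub>R w"] \<delta> by (simp add: divide_right_mono)
    have inner: "ennreal (cmod (f y)) = (\<integral>\<^sup>+z. F y z \<partial>nu)" for y
    proof -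
      have "cmod (f y) = (\<integral>z. rho_delta rho \<delta> (y - z) * dist x y powr (-s) \<partial>nu)"
        unfolding nf nu_delta_def by simp
      also have "ennreal \<dots> = (\<integral>\<^sup>+z. F y z \<partial>nu)"
        unfolding F_def
      proof (rule nn_integral_eq_integral[symmetric])
        show "integrable nu (\<lambda>z. rho_delta rho \<delta> (y - z) * dist x y powr (-s))"
        proof (rule nu.integrable_const_bound[where B = "M / \<delta> ^ DIM('a) * dist x y powr (-s)"])
          show "AE z in nu. norm (rho_delta rho \<delta> (y - z) * dist x y powr (-s)) \<le> M / \<delta> ^ DIM('a) * dist x y powr (-s)"
          proof (intro AE_I2)
            fix z
            have "rho_delta rho \<delta> (y - z) * dist x y powr (-s) \<le> M / \<delta> ^ DIM('a) * dist x y powr (-s)"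
              using rd_le by (intro mult_right_mono) auto
            thus "norm (rho_delta rho \<delta> (y - z) * dist x y powr (-s)) \<le> M / \<delta> ^ DIM('a) * dist x y powr (-s)"
              using rd_nn[of "y - z"] by simp
          qed
          show "(\<lambda>z. rho_delta rho \<delta> (y - z) * dist x y powr (-s)) \<in> borel_measurable nu"
            unfolding rho_delta_def by measurable
        qed
        show "AE z in nu. 0 \<le> rho_delta rho \<delta> (y - z) * dist x y powr (-s)"
          using rd_nn by (intro AE_I2) auto
      qed
      finally show ?thesis .
    qed
    have AEx: "AE z in nu. z \<noteq> x"
      by (rule AE_I[of _ _ "{x}"]) (auto simp: nu_pt nusets)
    have "(\<integral>\<^sup>+y. ennreal (cmod (f y)) \<partial>lborel) = (\<integral>\<^sup>+y. (\<integral>\<^sup>+z. F y z \<partial>nu) \<partial>lborel)"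
      by (simp only: inner)
    also have "\<dots> = (\<integral>\<^sup>+z. (\<integral>\<^sup>+y. F y z \<partial>lborel) \<partial>nu)"
      by (rule P.Fubini'[OF Fm, symmetric])
    also have "\<dots> \<le> (\<integral>\<^sup>+z. ennreal B0 * ennreal (dist x z powr (-s)) \<partial>nu)"
    proof (intro nn_integral_mono_AE)
      show "AE z in nu. (\<integral>\<^sup>+y. F y z \<partial>lborel) \<le> ennreal B0 * ennreal (dist x z powr (-s))"
        using AEx
      proof (rule AE_mp, intro AE_I2 impI)
        fix z assume "z \<noteq> x"
        have "(\<integral>\<^sup>+y. F y z \<partial>lborel) \<le> ennreal (B0 * dist x z powr (-s))"
          unfolding F_def B0_def
          by (rule kernel_bound[OF rho_meas rho_nn rho_supp Mb V leb s \<delta> \<open>z \<noteq> x\<close>])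
        also have "\<dots> = ennreal B0 * ennreal (dist x z powr (-s))" using B0 by (intro ennreal_mult) auto
        finally show "(\<integral>\<^sup>+y. F y z \<partial>lborel) \<le> ennreal B0 * ennreal (dist x z powr (-s))" .
      qed
    qed
    also have "\<dots> = ennreal B0 * (\<integral>\<^sup>+z. ennreal (dist x z powr (-s)) \<partial>nu)"
      by (intro nn_integral_cmult) measurable
    also have "\<dots> \<le> ennreal B0 * ennreal (Snu + 1)"
    proof (intro mult_left_mono)
      have cb[measurable]: "\<And>c r. cball c r \<in> sets borel" by simp
      have "(\<integral>\<^sup>+z. ennreal (dist x z powr (-s)) \<partial>nu)
          \<le> (\<integral>\<^sup>+z. (indicator (cball x 1) z * ennreal (dist x z powr (-s)) + 1) \<partial>nu)"
      proof (intro nn_integral_mono)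
        fix z
        show "ennreal (dist x z powr (-s)) \<le> indicator (cball x 1) z * ennreal (dist x z powr (-s)) + 1"
        proof (cases "dist x z \<le> 1")
          case True thus ?thesis by (simp add: indicator_def)
        next
          case False
          hence "dist x z powr (-s) \<le> 1 powr (-s)" using s by (intro powr_mono2') auto
          hence "ennreal (dist x z powr (-s)) \<le> 1" by (simp add: ennreal_leI)
          thus ?thesis using False by (simp add: indicator_def)
        qed
      qed
      also have "\<dots> = (\<integral>\<^sup>+z. indicator (cball x 1) z * ennreal (dist x z powr (-s)) \<partial>nu) + (\<integral>\<^sup>+z. 1 \<partial>nu)"
        by (intro nn_integral_add) measurable
      also have "\<dots> \<le> ennreal Snu + 1"
      proof (intro add_mono)
        show "(\<integral>\<^sup>+z. indicator (cball x 1) z * ennreal (dist x z powr (-s)) \<partial>nu) \<le> ennreal Snu"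
          unfolding Snu_def
          using s s' C by (intro shell[OF nusets] nu_cb) auto
        show "(\<integral>\<^sup>+z. 1 \<partial>nu) \<le> 1" by (simp add: nu.emeasure_space_1)
      qed
      also have "\<dots> = ennreal (Snu + 1)" using Snu by simp
      finally show "(\<integral>\<^sup>+z. ennreal (dist x z powr (-s)) \<partial>nu) \<le> ennreal (Snu + 1)" .
    qed auto
    also have "\<dots> = ennreal (B0 * (Snu + 1))" using B0 Snu by (simp add: ennreal_mult)
    finally have nn1: "(\<integral>\<^sup>+y. ennreal (cmod (f y)) \<partial>lborel) \<le> ennreal (B0 * (Snu + 1))" .
    have "cmod (nu_delta_beta nu rho \<delta> \<alpha> x) = cmod cst * cmod (integral\<^sup>L lborel f)"
      unfolding nu_delta_beta_def cst_def f_def by (rule norm_mult)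
    also have "\<dots> \<le> cmod cst * (B0 * (Snu + 1))"
    proof (intro mult_left_mono)
      have "cmod (integral\<^sup>L lborel f) \<le> (\<integral>y. cmod (f y) \<partial>lborel)" by (rule integral_norm_bound)
      also have "\<dots> \<le> B0 * (Snu + 1)"
        using nn1 B0 Snu by (intro integral_real_bounded) auto
      finally show "cmod (integral\<^sup>L lborel f) \<le> B0 * (Snu + 1)" .
    qed simp
    finally show "cmod (nu_delta_beta nu rho \<delta> \<alpha> x) \<le> cmod cst * (B0 * (Snu + 1))" .
  qed
qed

end
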